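(* Let $\lambda\ge\Delta^{-1/2}$. Let $Y=(S,R,S')$ be random with $S\sim\mu$, $\mathbb P(S'=j\mid S=i)=P_{ij}$ and $R\mid(S=i,S'=j)\sim\mathrm{Law}(R_{ij})$ for all $i,j\in\mathcal S$. Then \[ \mathbb E\bigl[(H_g(p,Y),R)\bigr]=\bigl(h^{(g)}_\mu(p),\bar r^\pi\bigr)\quad\text{for all }(p,g)\in\mathcal Z. \] Moreover, the map $(p,g)\mapsto(h^{(g)}_\mu(p),\bar r^\pi)$ is non-expansive in $d_\lambda$, and its fixed-point set equals $\{(p,\bar r^\pi):p\in\mathrm{fix}(\mathcal G)\}$.
   Context: Finite MDP with state set $\mathcal{S}=\{1,\dots,m\}$, finite action set, deterministic rewards in $[0,1]$, fixed policy inducing a transition matrix $P=(P_{ij})$ on $\mathcal S$ that is irreducible and aperiodic with stationary distribution $\mu$. $R_{ij}$ is the finite-valued $[0,1]$-valued random one-step reward conditioned on transition $i\to j$; gain $\bar r^\pi=\sum_i\mu_i\sum_jP_{ij}\mathbb E[R_{ij}]$; $\nu^{(g)}_{ij}:=\mathrm{Law}(R_{ij}-g)$. $\Theta=\{\theta_1<\dots<\theta_d\}$ with constant stride $\Delta>0$; $\Delta_d$ the probability simplex of $\mathbb R^d$; $\Delta_d^{\mathcal S}$ families $(p_i)_{i\in\mathcal S}$, $p_i\in\Delta_d$; $\mathcal Z:=\Delta_d^{\mathcal S}\times[0,1]$. For $u\in\Delta_d$, $\eta^{u,0}:=\sum_ku_k\delta_{\theta_k}$. Categorical projection $\Pi^\Theta_{\mathrm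 C}$: $\delta_x\mapsto\delta_{\theta_1}$ if $x\le\theta_1$, $\delta_{\theta_d}$ if $x\ge\theta_d$, $\frac{\theta_{k+1}-x}{\Delta}\delta_{\theta_k}+\frac{x-\theta_k}{\Delta}\delta_{\theta_{k+1}}$ if $\theta_k\le x\le\theta_{k+1}$, extended linearly to laws. For $b\in\mathbb R$, $L_bu\in\Delta_d$ is defined by $\Pi^\Theta_{\mathrm C}(\text{law of }X+b,\ X\sim\eta^{u,0})=\eta^{L_bu,0}$. $\mathcal G_g(p)$ is the unique $q\in\Delta_d^{\mathcal S}$ with $\eta^{q_i,0}=\Pi^\Theta_{\mathrm C}(\sum_jP_{ij}(\nu^{(g)}_{ij}\ast\eta^{p_j,0}))$ for all $i$; $\mathcal G:=\mathcal G_{\bar r^\pi}$, $\mathrm{fix}(\mathcal G)$ its fixed-point set. $h^{(g)}_\mu(p)_i:=(1-\mu_i)p_i+\mu_i\mathcal G_g(p)_i$. $H_g(p,(s,r,s'))=q$ with $q_u=p_u$ for $u\ne s$, $q_s=L_{r-g}p_{s'}$. Coordinate Cramér metric: $F_u(\theta_k):=\sum_{j\le k}u_j$, $\ell^\Theta_{\mathrm C}(u,v)^2:=\Delta\sum_{k=1}^{d-1}(F_u(\theta_k)-F_v(\theta_k))^2$, $\ell^\Theta_{\mathrm C,\infty}(p,q):=\max_i\ell^\Theta_{\mathrm C}(p_i,q_i)$; $d_\lambda((p,g),(q,g')):=\ell^\Theta_{\mathrm C,\infty}(p,q)+\lambda|g-g'|$. *)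

theory Defs
  imports "HOL-Probability.Probability"
begin

text \<open>Atoms: theta_k = th0 + k * Dl for k = 0..d-1 (0-indexed version of theta_1 < ... < theta_d).\<close>

definition Ptr :: "('s \<Rightarrow> 's pmf) \<Rightarrow> 's \<Rightarrow> 's \<Rightarrow> real" where
  "Ptr K i j = pmf (K i) j"

fun Ppow :: "('s::finite \<Rightarrow> 's pmf) \<Rightarrow> nat \<Rightarrow> 's \<Rightarrow> 's \<Rightarrow> real" where
  "Ppow K 0 i j = (if i = j then 1 else 0)"
| "Ppow K (Suc n) i j = (\<Sum>l\<in>UNIV. Ppow K n i l * Ptr K l j)"

definition irreducible_chain :: "('s::finite \<Rightarrow> 's pmf) \<Rightarrow> bool" where
  "irreducible_chain K \<longleftrightarrow> (\<forall>i j. \<exists>n. Ppow K n i j > 0)"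

definition aperiodic_chain :: "('s::finite \<Rightarrow> 's pmf) \<Rightarrow> bool" where
  "aperiodic_chain K \<longleftrightarrow> (\<forall>i. Gcd {n. n > 0 \<and> Ppow K n i i > 0} = 1)"

definition stationary :: "('s::finite \<Rightarrow> 's pmf) \<Rightarrow> 's pmf \<Rightarrow> bool" where
  "stationary K mu \<longleftrightarrow> (\<forall>j. (\<Sum>i\<in>UNIV. pmf mu i * Ptr K i j) = pmf mu j)"

definition gain :: "('s::finite \<Rightarrow> 's pmf) \<Rightarrow> 's pmf \<Rightarrow> ('s \<Rightarrow> 's \<Rightarrow> real pmf) \<Rightarrow> real" where
  "gain K mu Rl = (\<Sum>i\<in>UNIV. pmf mu i * (\<Sum>j\<in>UNIV. Ptr K i j * measure_pmf.expectation (Rl i j) (\<lambda>r. r)))"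

definition theta :: "real \<Rightarrow> real \<Rightarrow> nat \<Rightarrow> real" where
  "theta th0 Dl k = th0 + real k * Dl"

definition cat_simplex :: "nat \<Rightarrow> (nat \<Rightarrow> real) set" where
  "cat_simplex d = {u. (\<forall>k. 0 \<le> u k) \<and> (\<forall>k\<ge>d. u k = 0) \<and> (\<Sum>k<d. u k) = 1}"

text \<open>Categorical projection of a Dirac mass delta_x, as a weight vector on the atoms.\<close>
definition cproj :: "real \<Rightarrow> real \<Rightarrow> nat \<Rightarrow> real \<Rightarrow> nat \<Rightarrow> real" where
  "cproj th0 Dl d x k =
     (if x \<le> theta th0 Dl 0 then (if k = 0 then 1 else 0)
      else if x \<ge> theta th0 Dl (d - 1) then (if k = d - 1 then 1 else 0)
      else (let j = nat \<lfloor>(x - th0) / Dl\<rfloor> in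
            if k = j then (theta th0 Dl (j + 1) - x) / Dl
            else if k = j + 1 then (x - theta th0 Dl j) / Dl
            else 0))"

definition cprojL :: "real \<Rightarrow> real \<Rightarrow> nat \<Rightarrow> real pmf \<Rightarrow> nat \<Rightarrow> real" where
  "cprojL th0 Dl d nu k = measure_pmf.expectation nu (\<lambda>x. cproj th0 Dl d x k)"

text \<open>eta^{u,0} = sum_k u_k delta_{theta_k}.\<close>
definition eta :: "real \<Rightarrow> real \<Rightarrow> nat \<Rightarrow> (nat \<Rightarrow> real) \<Rightarrow> real pmf" where
  "eta th0 Dl d u = embed_pmf (\<lambda>x. \<Sum>k\<in>{k. k < d \<and> theta th0 Dl k = x}. u k)"

definition conv_pmf :: "real pmf \<Rightarrow> real pmf \<Rightarrow> real pmf" where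
  "conv_pmf nu eta' = bind_pmf nu (\<lambda>x. map_pmf (\<lambda>y. x + y) eta')"

definition Lshift :: "real \<Rightarrow> real \<Rightarrow> nat \<Rightarrow> real \<Rightarrow> (nat \<Rightarrow> real) \<Rightarrow> nat \<Rightarrow> real" where
  "Lshift th0 Dl d b u = cprojL th0 Dl d (map_pmf (\<lambda>x. x + b) (eta th0 Dl d u))"

definition Gop :: "real \<Rightarrow> real \<Rightarrow> nat \<Rightarrow> ('s \<Rightarrow> 's pmf) \<Rightarrow> ('s \<Rightarrow> 's \<Rightarrow> real pmf)
    \<Rightarrow> real \<Rightarrow> ('s \<Rightarrow> nat \<Rightarrow> real) \<Rightarrow> 's \<Rightarrow> nat \<Rightarrow> real" where
  "Gop th0 Dl d K Rl g p i = cprojL th0 Dl d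
     (bind_pmf (K i) (\<lambda>j. conv_pmf (map_pmf (\<lambda>r. r - g) (Rl i j)) (eta th0 Dl d (p j))))"

definition hmu :: "real \<Rightarrow> real \<Rightarrow> nat \<Rightarrow> ('s \<Rightarrow> 's pmf) \<Rightarrow> 's pmf \<Rightarrow> ('s \<Rightarrow> 's \<Rightarrow> real pmf)
    \<Rightarrow> real \<Rightarrow> ('s \<Rightarrow> nat \<Rightarrow> real) \<Rightarrow> 's \<Rightarrow> nat \<Rightarrow> real" where
  "hmu th0 Dl d K mu Rl g p i k = (1 - pmf mu i) * p i k + pmf mu i * Gop th0 Dl d K Rl g p i k"

definition Hupd :: "real \<Rightarrow> real \<Rightarrow> nat \<Rightarrow> real \<Rightarrow> ('s \<Rightarrow> nat \<Rightarrow> real) \<Rightarrow> 's \<times> real \<times> 's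
    \<Rightarrow> 's \<Rightarrow> nat \<Rightarrow> real" where
  "Hupd th0 Dl d g p y = (case y of (s, r, s') \<Rightarrow> p(s := Lshift th0 Dl d (r - g) (p s')))"

definition Ylaw :: "('s \<Rightarrow> 's pmf) \<Rightarrow> 's pmf \<Rightarrow> ('s \<Rightarrow> 's \<Rightarrow> real pmf) \<Rightarrow> ('s \<times> real \<times> 's) pmf" where
  "Ylaw K mu Rl = bind_pmf mu (\<lambda>s. bind_pmf (K s) (\<lambda>s'. map_pmf (\<lambda>r. (s, r, s')) (Rl s s')))"

definition Zset :: "nat \<Rightarrow> (('s \<Rightarrow> nat \<Rightarrow> real) \<times> real) set" where
  "Zset d = {(p, g). (\<forall>i. p i \<in> cat_simplex d) \<and> g \<in> {0..1}}"

definition cdf :: "(nat \<Rightarrow> real) \<Rightarrow> nat \<Rightarrow> real" where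
  "cdf u k = (\<Sum>j\<le>k. u j)"

definition lC :: "real \<Rightarrow> nat \<Rightarrow> (nat \<Rightarrow> real) \<Rightarrow> (nat \<Rightarrow> real) \<Rightarrow> real" where
  "lC Dl d u v = sqrt (Dl * (\<Sum>k<d - 1. (cdf u k - cdf v k)\<^sup>2))"

definition lCinf :: "real \<Rightarrow> nat \<Rightarrow> ('s::finite \<Rightarrow> nat \<Rightarrow> real) \<Rightarrow> ('s \<Rightarrow> nat \<Rightarrow> real) \<Rightarrow> real" where
  "lCinf Dl d p q = Max (range (\<lambda>i. lC Dl d (p i) (q i)))"

definition dlam :: "real \<Rightarrow> nat \<Rightarrow> real \<Rightarrow> ('s::finite \<Rightarrow> nat \<Rightarrow> real) \<times> real
    \<Rightarrow> ('s \<Rightarrow> nat \<Rightarrow> real) \<times> real \<Rightarrow> real" where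
  "dlam Dl d lam z z' = lCinf Dl d (fst z) (fst z') + lam * \<bar>snd z - snd z'\<bar>"

definition Tmap :: "real \<Rightarrow> real \<Rightarrow> nat \<Rightarrow> ('s::finite \<Rightarrow> 's pmf) \<Rightarrow> 's pmf \<Rightarrow> ('s \<Rightarrow> 's \<Rightarrow> real pmf)
    \<Rightarrow> ('s \<Rightarrow> nat \<Rightarrow> real) \<times> real \<Rightarrow> ('s \<Rightarrow> nat \<Rightarrow> real) \<times> real" where
  "Tmap th0 Dl d K mu Rl z = (hmu th0 Dl d K mu Rl (snd z) (fst z), gain K mu Rl)"

end

theory Submission
  imports Defs
begin

definition psi :: "real \<Rightarrow> real \<Rightarrow> nat \<Rightarrow> real \<Rightarrow> real" where
  "psi th0 Dl k x = max 0 (min 1 (real k + 1 - (x - th0) / Dl))"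

lemma theta_inj: "Dl > 0 \<Longrightarrow> theta th0 Dl a = theta th0 Dl b \<longleftrightarrow> a = b"
  by (auto simp: theta_def)

lemma sum_two_delta:
  fixes a b :: real and j k :: nat
  shows "(\<Sum>i\<le>k. (if i = j then a else if i = j + 1 then b else 0))
       = (if j \<le> k then a else 0) + (if j + 1 \<le> k then b else 0)"
proof -
  have "(\<Sum>i\<le>k. (if i = j then a else if i = j + 1 then b else 0))
      = (\<Sum>i\<le>k. (if i = j then a else 0) + (if i = j + 1 then b else 0))"
    by (rule sum.cong) simp_all
  also have "\<dots> = (\<Sum>i\<le>k. (if i = j then a else 0)) + (\<Sum>i\<le>k. (if i = j + 1 then b else 0))"
    by (rule sum.distrib)
  finally show ?thesis by simp
qed

lemma cdf_cproj:
  assumes Dl: "Dl > 0" and k: "k < d - 1"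
  shows "cdf (cproj th0 Dl d x) k = psi th0 Dl k x"
proof -
  define t where "t = (x - th0) / Dl"
  have xt: "x = th0 + t * Dl" using Dl by (simp add: t_def)
  show ?thesis
  proof (cases "x \<le> theta th0 Dl 0")
    case True
    then have "t \<le> 0" using Dl by (simp add: xt theta_def mult_le_0_iff)
    then show ?thesis using True
      by (simp add: cdf_def cproj_def psi_def t_def[symmetric])
  next
    case F1: False
    show ?thesis
    proof (cases "x \<ge> theta th0 Dl (d - 1)")
      case True
      then have "t \<ge> real (d-1)" using Dl by (simp add: xt theta_def)
      moreover have "real (d-1) \<ge> real k + 1" using k by linarith
      ultimately show ?thesis using True F1 k
        by (simp add: cdf_def cproj_def psi_def t_def[symmetric])
    next
      case F2: False
      have t0: "t > 0"
      proof (rule ccontr)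
        assume "\<not> t > 0"
        then have "t * Dl \<le> 0" using Dl by (simp add: mult_nonpos_nonneg)
        then show False using F1 by (simp add: xt theta_def)
      qed
      have t1: "t < real (d - 1)" using F2 Dl by (simp add: xt theta_def)
      define j where "j = nat \<lfloor>t\<rfloor>"
      have fl: "real j \<le> t" "t < real j + 1" using t0 by (simp_all add: j_def)
      have a: "(theta th0 Dl (j + 1) - x) / Dl = real j + 1 - t"
        using Dl by (simp add: xt theta_def field_simps)
      have b: "(x - theta th0 Dl j) / Dl = t - real j"
        using Dl by (simp add: xt theta_def field_simps)
      have "cdf (cproj th0 Dl d x) k = (\<Sum>i\<le>k. (if i = j then real j + 1 - t else if i = j + 1 then t - real j else 0))"
        unfolding cdf_def cproj_def using F1 F2 by (simp only: Let_def t_def[symmetric] j_def[symmetric] if_False a b)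
      also have "\<dots> = (if j \<le> k then real j + 1 - t else 0) + (if j + 1 \<le> k then t - real j else 0)"
        by (rule sum_two_delta)
      also have "\<dots> = psi th0 Dl k x"
        unfolding psi_def t_def[symmetric] using fl
        by (cases "k < j"; cases "k = j") (auto simp: max_def min_def)
      finally show ?thesis .
    qed
  qed
qed

lemma eta_set_theta:
  assumes "Dl > 0" "m < d"
  shows "{k. k < d \<and> theta th0 Dl k = theta th0 Dl m} = {m}"
  using assms theta_inj[OF assms(1)] by auto

lemma eta_set_out:
  assumes "x \<notin> theta th0 Dl ` {..<d}"
  shows "{k. k < d \<and> theta th0 Dl k = x} = {}"
  using assms by auto

lemma eta_props:
  assumes Dl: "Dl > 0" and u: "u \<in> cat_simplex d"
  shows "pmf (eta th0 Dl d u) x = (\<Sum>k\<in>{k. k < d \<and> theta th0 Dl k = x}. u k)"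
    and "set_pmf (eta th0 Dl d u) \<subseteq> theta th0 Dl ` {..<d}"
proof -
  define f where "f x = (\<Sum>k\<in>{k. k < d \<and> theta th0 Dl k = x}. u k)" for x
  have nn: "\<And>x. 0 \<le> f x" unfolding f_def using u by (auto simp: cat_simplex_def intro: sum_nonneg)
  have inj: "inj_on (theta th0 Dl) {..<d}" using theta_inj[OF Dl] by (auto simp: inj_on_def)
  have ft: "\<And>m. m < d \<Longrightarrow> f (theta th0 Dl m) = u m" unfolding f_def using eta_set_theta[OF Dl] by simp
  have fo: "\<And>x. x \<notin> theta th0 Dl ` {..<d} \<Longrightarrow> f x = 0" unfolding f_def using eta_set_out by (metis sum.empty)
  have "(\<integral>\<^sup>+x. ennreal (f x) \<partial>count_space UNIV) = (\<Sum>x\<in>theta th0 Dl ` {..<d}. ennreal (f x))"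
    by (rule nn_integral_count_space') (auto simp: fo)
  also have "\<dots> = ennreal (\<Sum>x\<in>theta th0 Dl ` {..<d}. f x)"
    using nn by (simp add: sum_ennreal)
  also have "(\<Sum>x\<in>theta th0 Dl ` {..<d}. f x) = (\<Sum>m<d. f (theta th0 Dl m))"
    using inj by (simp add: sum.reindex)
  also have "\<dots> = (\<Sum>m<d. u m)" using ft by simp
  also have "\<dots> = 1" using u by (simp add: cat_simplex_def)
  finally have prob: "(\<integral>\<^sup>+x. ennreal (f x) \<partial>count_space UNIV) = 1" by simp
  have e: "eta th0 Dl d u = embed_pmf f" unfolding eta_def f_def by simp
  show "pmf (eta th0 Dl d u) x = (\<Sum>k\<in>{k. k < d \<and> theta th0 Dl k = x}. u k)"
    by (simp only: e pmf_embed_pmf[OF nn prob] f_def)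
  show "set_pmf (eta th0 Dl d u) \<subseteq> theta th0 Dl ` {..<d}"
    unfolding e using set_embed_pmf[OF nn prob] fo by auto
qed

lemma eta_finite:
  assumes "Dl > 0" "u \<in> cat_simplex d"
  shows "finite (set_pmf (eta th0 Dl d u))"
  using eta_props(2)[OF assms] finite_subset by blast

lemma exp_eta:
  assumes Dl: "Dl > 0" and u: "u \<in> cat_simplex d"
  shows "measure_pmf.expectation (eta th0 Dl d u) F = (\<Sum>m<d. u m * F (theta th0 Dl m))"
proof -
  have inj: "inj_on (theta th0 Dl) {..<d}" using theta_inj[OF Dl] by (auto simp: inj_on_def)
  have "measure_pmf.expectation (eta th0 Dl d u) F
      = (\<Sum>a\<in>theta th0 Dl ` {..<d}. F a * pmf (eta th0 Dl d u) a)"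
    by (rule integral_measure_pmf_real) (use eta_props(2)[OF Dl u] in auto)
  also have "\<dots> = (\<Sum>m<d. F (theta th0 Dl m) * pmf (eta th0 Dl d u) (theta th0 Dl m))"
    using inj by (simp add: sum.reindex)
  also have "\<dots> = (\<Sum>m<d. u m * F (theta th0 Dl m))"
    by (rule sum.cong) (auto simp: eta_props(1)[OF Dl u] eta_set_theta[OF Dl])
  finally show ?thesis .
qed

lemma exp_bind:
  fixes h :: "'b \<Rightarrow> real"
  assumes "finite (set_pmf p)" "\<And>x. x \<in> set_pmf p \<Longrightarrow> finite (set_pmf (N x))"
  shows "measure_pmf.expectation (bind_pmf p N) h
       = measure_pmf.expectation p (\<lambda>x. measure_pmf.expectation (N x) h)"
proof -
  have "measure_pmf.expectation (bind_pmf p N) h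
     = (\<Sum>a\<in>set_pmf p. pmf p a *\<^sub>R measure_pmf.expectation (N a) h)"
    by (rule pmf_expectation_bind) (use assms in auto)
  also have "\<dots> = measure_pmf.expectation p (\<lambda>x. measure_pmf.expectation (N x) h)"
    by (rule integral_measure_pmf[symmetric]) (use assms in auto)
  finally show ?thesis .
qed

lemma exp_finite_type:
  fixes p :: "'s::finite pmf" and h :: "'s \<Rightarrow> real"
  shows "measure_pmf.expectation p h = (\<Sum>x\<in>UNIV. pmf p x * h x)"
  by (subst integral_measure_pmf[of UNIV]) auto

lemma exp_sum:
  fixes h :: "'i \<Rightarrow> 'b \<Rightarrow> real"
  assumes "finite (set_pmf p)"
  shows "(\<Sum>j\<in>A. measure_pmf.expectation p (h j)) = measure_pmf.expectation p (\<lambda>x. \<Sum>j\<in>A. h j x)"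
proof -
  have "\<And>j. integrable (measure_pmf p) (h j)" using assms by (rule integrable_measure_pmf_finite)
  then show ?thesis by (simp add: integral_sum)
qed

lemma Lshift_exp:
  assumes Dl: "Dl > 0" and u: "u \<in> cat_simplex d"
  shows "Lshift th0 Dl d b u k = (\<Sum>m<d. u m * cproj th0 Dl d (theta th0 Dl m + b) k)"
  unfolding Lshift_def cprojL_def by (simp add: exp_eta[OF Dl u])

lemma cdf_Lshift:
  assumes Dl: "Dl > 0" and u: "u \<in> cat_simplex d" and k: "k < d - 1"
  shows "cdf (Lshift th0 Dl d b u) k = (\<Sum>m<d. u m * psi th0 Dl k (theta th0 Dl m + b))"
proof -
  have "cdf (Lshift th0 Dl d b u) k = (\<Sum>k'\<le>k. \<Sum>m<d. u m * cproj th0 Dl d (theta th0 Dl m + b) k')"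
    unfolding cdf_def by (simp add: Lshift_exp[OF Dl u])
  also have "\<dots> = (\<Sum>m<d. u m * cdf (cproj th0 Dl d (theta th0 Dl m + b)) k)"
    unfolding cdf_def by (subst sum.swap) (simp add: sum_distrib_left)
  also have "\<dots> = (\<Sum>m<d. u m * psi th0 Dl k (theta th0 Dl m + b))"
    using cdf_cproj[OF Dl k] by simp
  finally show ?thesis .
qed

lemma finite_set_pmf_finite_type: "finite (set_pmf (p :: 's::finite pmf))"
  by simp

lemma Gop_exp:
  fixes K :: "'s::finite \<Rightarrow> 's pmf"
  assumes Dl: "Dl > 0" and p: "\<And>j. p j \<in> cat_simplex d"
    and fin: "\<And>i j. finite (set_pmf (Rl i j))"
  shows "Gop th0 Dl d K Rl g p i k
     = measure_pmf.expectation (K i) (\<lambda>j. measure_pmf.expectation (Rl i j)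
          (\<lambda>r. Lshift th0 Dl d (r - g) (p j) k))"
proof -
  have fc: "finite (set_pmf (conv_pmf (map_pmf (\<lambda>r. r - g) (Rl i j)) (eta th0 Dl d (p j))))" for j
    unfolding conv_pmf_def using fin eta_finite[OF Dl p] by simp
  have "Gop th0 Dl d K Rl g p i k = measure_pmf.expectation (K i) (\<lambda>j.
      measure_pmf.expectation (conv_pmf (map_pmf (\<lambda>r. r - g) (Rl i j)) (eta th0 Dl d (p j)))
        (\<lambda>x. cproj th0 Dl d x k))"
    unfolding Gop_def cprojL_def by (rule exp_bind) (use fc in auto)
  also have "\<dots> = measure_pmf.expectation (K i) (\<lambda>j. measure_pmf.expectation (Rl i j)
          (\<lambda>r. Lshift th0 Dl d (r - g) (p j) k))"
  proof (rule arg_cong[where f="measure_pmf.expectation (K i)"], rule ext)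
    fix j
    have "measure_pmf.expectation (conv_pmf (map_pmf (\<lambda>r. r - g) (Rl i j)) (eta th0 Dl d (p j)))
        (\<lambda>x. cproj th0 Dl d x k)
      = measure_pmf.expectation (map_pmf (\<lambda>r. r - g) (Rl i j))
         (\<lambda>x. measure_pmf.expectation (map_pmf ((+) x) (eta th0 Dl d (p j))) (\<lambda>x. cproj th0 Dl d x k))"
      unfolding conv_pmf_def by (rule exp_bind) (use fin eta_finite[OF Dl p] in auto)
    also have "\<dots> = measure_pmf.expectation (Rl i j) (\<lambda>r. Lshift th0 Dl d (r - g) (p j) k)"
      unfolding Lshift_def cprojL_def by (simp add: add.commute)
    finally show "measure_pmf.expectation (conv_pmf (map_pmf (\<lambda>r. r - g) (Rl i j)) (eta th0 Dl d (p j)))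
        (\<lambda>x. cproj th0 Dl d x k) = measure_pmf.expectation (Rl i j) (\<lambda>r. Lshift th0 Dl d (r - g) (p j) k)" .
  qed
  finally show ?thesis .
qed

lemma cdf_Gop:
  fixes K :: "'s::finite \<Rightarrow> 's pmf"
  assumes Dl: "Dl > 0" and p: "\<And>j. p j \<in> cat_simplex d"
    and fin: "\<And>i j. finite (set_pmf (Rl i j))" and k: "k < d - 1"
  shows "cdf (Gop th0 Dl d K Rl g p i) k
     = measure_pmf.expectation (K i) (\<lambda>j. measure_pmf.expectation (Rl i j)
          (\<lambda>r. \<Sum>m<d. p j m * psi th0 Dl k (theta th0 Dl m + (r - g))))"
proof -
  have "cdf (Gop th0 Dl d K Rl g p i) k = (\<Sum>k'\<le>k. measure_pmf.expectation (K i) (\<lambda>j. measure_pmf.expectation (Rl i j)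
          (\<lambda>r. Lshift th0 Dl d (r - g) (p j) k')))"
    unfolding cdf_def by (intro sum.cong refl Gop_exp[OF Dl p fin])
  also have "\<dots> = measure_pmf.expectation (K i) (\<lambda>j. \<Sum>k'\<le>k. measure_pmf.expectation (Rl i j)
          (\<lambda>r. Lshift th0 Dl d (r - g) (p j) k'))"
    by (rule exp_sum) simp
  also have "\<dots> = measure_pmf.expectation (K i) (\<lambda>j. measure_pmf.expectation (Rl i j)
          (\<lambda>r. cdf (Lshift th0 Dl d (r - g) (p j)) k))"
    unfolding cdf_def by (subst exp_sum[OF fin]) simp
  also have "\<dots> = measure_pmf.expectation (K i) (\<lambda>j. measure_pmf.expectation (Rl i j)
          (\<lambda>r. \<Sum>m<d. p j m * psi th0 Dl k (theta th0 Dl m + (r - g))))"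
    by (simp add: cdf_Lshift[OF Dl p k])
  finally show ?thesis .
qed

lemma psi_bounds: "0 \<le> psi th0 Dl k x" "psi th0 Dl k x \<le> 1"
  unfolding psi_def by auto

lemma psi_anti:
  assumes Dl: "Dl > 0" and xy: "x \<le> y"
  shows "psi th0 Dl k y \<le> psi th0 Dl k x"
proof -
  have "(x - th0) / Dl \<le> (y - th0) / Dl" using Dl xy by (simp add: divide_right_mono)
  then show ?thesis unfolding psi_def by linarith
qed

lemma clamp_lip:
  fixes z1 z2 :: real
  assumes "z2 \<le> z1"
  shows "max 0 (min 1 z1) - max 0 (min 1 z2) \<le> z1 - z2"
  using assms by (auto simp: max_def min_def)

lemma psi_lip:
  assumes Dl: "Dl > 0" and xy: "x \<le> y"
  shows "psi th0 Dl k x - psi th0 Dl k y \<le> (y - x) / Dl"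
proof -
  have e: "(y - th0) / Dl - (x - th0) / Dl = (y - x) / Dl" using Dl by (simp add: field_simps)
  have "(x - th0) / Dl \<le> (y - th0) / Dl" using Dl xy by (simp add: divide_right_mono)
  then have "max 0 (min 1 (real k + 1 - (x - th0) / Dl)) - max 0 (min 1 (real k + 1 - (y - th0) / Dl))
     \<le> (real k + 1 - (x - th0) / Dl) - (real k + 1 - (y - th0) / Dl)"
    by (intro clamp_lip) simp
  then show ?thesis unfolding psi_def using e by linarith
qed

lemma psi_sum:
  assumes Dl: "Dl > 0"
  shows "(\<Sum>k<n. psi th0 Dl k x) = max 0 (min (real n) (real n - (x - th0) / Dl))"
proof (induction n)
  case 0
  then show ?case by simp
next
  case (Suc n)
  then show ?case unfolding psi_def by (simp add: max_def min_def)
qed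

lemma psi_sum_diff:
  assumes Dl: "Dl > 0" and xy: "x \<le> y"
  shows "(\<Sum>k<n. psi th0 Dl k x) - (\<Sum>k<n. psi th0 Dl k y) \<le> (y - x) / Dl"
proof -
  have e: "(y - th0) / Dl - (x - th0) / Dl = (y - x) / Dl" using Dl by (simp add: field_simps)
  have "(x - th0) / Dl \<le> (y - th0) / Dl" using Dl xy by (simp add: divide_right_mono)
  then show ?thesis unfolding psi_sum[OF Dl] using e by linarith
qed

lemma gpart_pointwise_le:
  assumes Dl: "Dl > 0" and xy: "x \<le> y"
  shows "(\<Sum>k<n. (psi th0 Dl k x - psi th0 Dl k y)\<^sup>2) \<le> ((x - y) / Dl)\<^sup>2"
proof -
  define c where "c = (y - x) / Dl"
  have c0: "0 \<le> c" using Dl xy by (simp add: c_def)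
  have a0: "\<And>k. 0 \<le> psi th0 Dl k x - psi th0 Dl k y" using psi_anti[OF Dl xy] by simp
  have ac: "\<And>k. psi th0 Dl k x - psi th0 Dl k y \<le> c" using psi_lip[OF Dl xy] by (simp add: c_def)
  have "(\<Sum>k<n. (psi th0 Dl k x - psi th0 Dl k y)\<^sup>2) \<le> (\<Sum>k<n. c * (psi th0 Dl k x - psi th0 Dl k y))"
  proof (rule sum_mono)
    fix k
    show "(psi th0 Dl k x - psi th0 Dl k y)\<^sup>2 \<le> c * (psi th0 Dl k x - psi th0 Dl k y)"
      unfolding power2_eq_square using a0[of k] ac[of k] by (simp add: mult_right_mono)
  qed
  also have "\<dots> = c * ((\<Sum>k<n. psi th0 Dl k x) - (\<Sum>k<n. psi th0 Dl k y))"
    by (simp add: sum_subtractf right_diff_distrib sum_distrib_left)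
  also have "\<dots> \<le> c * c"
  proof -
    have "(\<Sum>k<n. psi th0 Dl k x) - (\<Sum>k<n. psi th0 Dl k y) \<le> c"
      unfolding c_def by (rule psi_sum_diff[OF Dl xy])
    then show ?thesis using c0 by (simp add: mult_left_mono)
  qed
  also have "\<dots> = ((x - y) / Dl)\<^sup>2" by (simp add: c_def power2_eq_square field_simps)
  finally show ?thesis .
qed

lemma gpart_pointwise:
  assumes Dl: "Dl > 0"
  shows "(\<Sum>k<n. (psi th0 Dl k x - psi th0 Dl k y)\<^sup>2) \<le> ((x - y) / Dl)\<^sup>2"
proof (cases "x \<le> y")
  case True
  then show ?thesis using gpart_pointwise_le[OF Dl] by blast
next
  case False
  then have "(\<Sum>k<n. (psi th0 Dl k y - psi th0 Dl k x)\<^sup>2) \<le> ((y - x) / Dl)\<^sup>2"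
    using gpart_pointwise_le[OF Dl, of y x] by simp
  moreover have "((y - x) / Dl)\<^sup>2 = ((x - y) / Dl)\<^sup>2" by (simp add: power2_eq_square field_simps)
  moreover have "(\<Sum>k<n. (psi th0 Dl k y - psi th0 Dl k x)\<^sup>2) = (\<Sum>k<n. (psi th0 Dl k x - psi th0 Dl k y)\<^sup>2)"
    by (simp add: power2_commute)
  ultimately show ?thesis by simp
qed

lemma wCS:
  fixes w a :: "'a \<Rightarrow> real"
  assumes "\<And>x. x \<in> A \<Longrightarrow> 0 \<le> w x"
  shows "(\<Sum>x\<in>A. w x * a x)\<^sup>2 \<le> (\<Sum>x\<in>A. w x) * (\<Sum>x\<in>A. w x * (a x)\<^sup>2)"
proof -
  have "(\<Sum>x\<in>A. sqrt (w x) * (sqrt (w x) * a x))\<^sup>2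
      \<le> (\<Sum>x\<in>A. (sqrt (w x))\<^sup>2) * (\<Sum>x\<in>A. (sqrt (w x) * a x)\<^sup>2)"
    by (rule Cauchy_Schwarz_ineq_sum)
  moreover have "(\<Sum>x\<in>A. sqrt (w x) * (sqrt (w x) * a x)) = (\<Sum>x\<in>A. w x * a x)"
    by (rule sum.cong) (use assms in \<open>auto simp: mult.assoc[symmetric]\<close>)
  moreover have "(\<Sum>x\<in>A. (sqrt (w x))\<^sup>2) = (\<Sum>x\<in>A. w x)"
    by (rule sum.cong) (use assms in auto)
  moreover have "(\<Sum>x\<in>A. (sqrt (w x) * a x)\<^sup>2) = (\<Sum>x\<in>A. w x * (a x)\<^sup>2)"
    by (rule sum.cong) (use assms in \<open>auto simp: power_mult_distrib\<close>)
  ultimately show ?thesis by simp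
qed

lemma Jsum:
  fixes w :: "'a \<Rightarrow> real" and X :: "'a \<Rightarrow> 'i \<Rightarrow> real"
  assumes fin: "finite A" and w0: "\<And>x. x \<in> A \<Longrightarrow> 0 \<le> w x" and w1: "(\<Sum>x\<in>A. w x) = 1"
    and B: "\<And>x. x \<in> A \<Longrightarrow> (\<Sum>k\<in>I. (X x k)\<^sup>2) \<le> Bd"
  shows "(\<Sum>k\<in>I. (\<Sum>x\<in>A. w x * X x k)\<^sup>2) \<le> Bd"
proof -
  have "(\<Sum>k\<in>I. (\<Sum>x\<in>A. w x * X x k)\<^sup>2) \<le> (\<Sum>k\<in>I. \<Sum>x\<in>A. w x * (X x k)\<^sup>2)"
    by (rule sum_mono) (use wCS[of A w, OF w0] w1 in auto)
  also have "\<dots> = (\<Sum>x\<in>A. w x * (\<Sum>k\<in>I. (X x k)\<^sup>2))"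
    by (subst sum.swap) (simp add: sum_distrib_left)
  also have "\<dots> \<le> (\<Sum>x\<in>A. w x * Bd)"
    by (rule sum_mono) (use w0 B in \<open>auto intro: mult_left_mono\<close>)
  also have "\<dots> = Bd" using w1 by (simp add: sum_distrib_right[symmetric])
  finally show ?thesis .
qed

lemma Jpmf:
  fixes M :: "'a pmf" and X :: "'a \<Rightarrow> 'i \<Rightarrow> real"
  assumes fin: "finite (set_pmf M)"
    and B: "\<And>x. x \<in> set_pmf M \<Longrightarrow> (\<Sum>k\<in>I. (X x k)\<^sup>2) \<le> Bd"
  shows "(\<Sum>k\<in>I. (measure_pmf.expectation M (\<lambda>x. X x k))\<^sup>2) \<le> Bd"
proof -
  have e: "measure_pmf.expectation M (\<lambda>x. X x k) = (\<Sum>x\<in>set_pmf M. pmf M x * X x k)" for k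
    by (subst integral_measure_pmf_real[OF fin]) (auto simp: mult.commute)
  show ?thesis unfolding e
    by (rule Jsum[OF fin]) (use B sum_pmf_eq_1[OF fin] in auto)
qed

lemma abel_sum:
  fixes a f :: "nat \<Rightarrow> real"
  shows "(\<Sum>m<Suc n. a m * f m) = cdf a n * f n + (\<Sum>m<n. cdf a m * (f m - f (Suc m)))"
proof (induction n)
  case 0
  then show ?case by (simp add: cdf_def)
next
  case (Suc n)
  have c: "cdf a (Suc n) = cdf a n + a (Suc n)" by (simp add: cdf_def)
  show ?case using Suc by (simp add: c algebra_simps)
qed

lemma pnonexp:
  assumes Dl: "Dl > 0" and u: "u \<in> cat_simplex d" and v: "v \<in> cat_simplex d" and d: "d > 0"
  shows "(\<Sum>k<d - 1. (\<Sum>m<d. (u m - v m) * psi th0 Dl k (theta th0 Dl m + b))\<^sup>2)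
       \<le> (\<Sum>k<d - 1. (cdf u k - cdf v k)\<^sup>2)"
proof -
  define n where "n = d - 1"
  have dn: "d = Suc n" using d by (simp add: n_def)
  define e where "e m = cdf u m - cdf v m" for m
  define w where "w k m = psi th0 Dl k (theta th0 Dl m + b) - psi th0 Dl k (theta th0 Dl (Suc m) + b)" for k m
  have cuv: "cdf (\<lambda>m. u m - v m) m = e m" for m by (simp add: cdf_def e_def sum_subtractf)
  have en: "e n = 0"
  proof -
    have "cdf u n = 1" "cdf v n = 1" using u v
      by (simp_all add: cdf_def cat_simplex_def dn lessThan_Suc_atMost[symmetric])
    then show ?thesis by (simp add: e_def)
  qed
  have th: "theta th0 Dl m + b \<le> theta th0 Dl (Suc m) + b" for m using Dl by (simp add: theta_def)
  have w0: "0 \<le> w k m" for k m unfolding w_def using psi_anti[OF Dl th] by simp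
  have wrow: "(\<Sum>m<n. w k m) \<le> 1" for k
  proof -
    have "(\<Sum>m<n. w k m) = psi th0 Dl k (theta th0 Dl 0 + b) - psi th0 Dl k (theta th0 Dl n + b)"
      unfolding w_def by (rule sum_lessThan_telescope')
    then show ?thesis using psi_bounds[of th0 Dl k] by (smt (verit) psi_bounds)
  qed
  have wcol: "(\<Sum>k<n. w k m) \<le> 1" for m
  proof -
    have "(\<Sum>k<n. w k m) = (\<Sum>k<n. psi th0 Dl k (theta th0 Dl m + b)) - (\<Sum>k<n. psi th0 Dl k (theta th0 Dl (Suc m) + b))"
      unfolding w_def by (simp add: sum_subtractf)
    also have "\<dots> \<le> ((theta th0 Dl (Suc m) + b) - (theta th0 Dl m + b)) / Dl"
      by (rule psi_sum_diff[OF Dl th])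
    also have "\<dots> = 1" using Dl by (simp add: theta_def algebra_simps)
    finally show ?thesis .
  qed
  have X: "(\<Sum>m<d. (u m - v m) * psi th0 Dl k (theta th0 Dl m + b)) = (\<Sum>m<n. w k m * e m)" for k
    unfolding dn abel_sum cuv en w_def by (simp add: mult.commute)
  have Xsq: "(\<Sum>m<n. w k m * e m)\<^sup>2 \<le> (\<Sum>m<n. w k m * (e m)\<^sup>2)" for k
  proof -
    have "(\<Sum>m<n. w k m * e m)\<^sup>2 \<le> (\<Sum>m<n. w k m) * (\<Sum>m<n. w k m * (e m)\<^sup>2)"
      by (rule wCS) (use w0 in auto)
    also have "\<dots> \<le> (\<Sum>m<n. w k m * (e m)\<^sup>2)"
      by (rule mult_left_le_one_le) (use w0 wrow in \<open>auto intro: sum_nonneg\<close>)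
    finally show ?thesis .
  qed
  have "(\<Sum>k<d - 1. (\<Sum>m<d. (u m - v m) * psi th0 Dl k (theta th0 Dl m + b))\<^sup>2)
      = (\<Sum>k<n. (\<Sum>m<n. w k m * e m)\<^sup>2)" unfolding X n_def ..
  also have "\<dots> \<le> (\<Sum>k<n. \<Sum>m<n. w k m * (e m)\<^sup>2)" by (rule sum_mono) (rule Xsq)
  also have "\<dots> = (\<Sum>m<n. (e m)\<^sup>2 * (\<Sum>k<n. w k m))"
    by (subst sum.swap) (simp add: sum_distrib_left mult.commute)
  also have "\<dots> \<le> (\<Sum>m<n. (e m)\<^sup>2)"
    by (rule sum_mono, rule mult_right_le_one_le) (use wcol w0 in \<open>auto intro: sum_nonneg\<close>)
  also have "\<dots> = (\<Sum>k<d - 1. (cdf u k - cdf v k)\<^sup>2)" by (simp add: e_def n_def)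
  finally show ?thesis .
qed

lemma exp_diff:
  fixes f g :: "'a \<Rightarrow> real"
  assumes "finite (set_pmf M)"
  shows "measure_pmf.expectation M f - measure_pmf.expectation M g
       = measure_pmf.expectation M (\<lambda>x. f x - g x)"
proof -
  have "integrable (measure_pmf M) f" "integrable (measure_pmf M) g"
    using assms by (auto intro: integrable_measure_pmf_finite)
  then show ?thesis by simp
qed

lemma Gop_ppart:
  fixes K :: "'s::finite \<Rightarrow> 's pmf"
  assumes Dl: "Dl > 0" and d: "d > 0" and p: "\<And>j. p j \<in> cat_simplex d" and q: "\<And>j. q j \<in> cat_simplex d"
    and fin: "\<And>i j. finite (set_pmf (Rl i j))"
    and B: "\<And>j. (\<Sum>k<d - 1. (cdf (p j) k - cdf (q j) k)\<^sup>2) \<le> Bd"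
  shows "(\<Sum>k<d - 1. (cdf (Gop th0 Dl d K Rl g p i) k - cdf (Gop th0 Dl d K Rl g q i) k)\<^sup>2) \<le> Bd"
proof -
  have e: "cdf (Gop th0 Dl d K Rl g p i) k - cdf (Gop th0 Dl d K Rl g q i) k
     = measure_pmf.expectation (K i) (\<lambda>j. measure_pmf.expectation (Rl i j)
          (\<lambda>r. \<Sum>m<d. (p j m - q j m) * psi th0 Dl k (theta th0 Dl m + (r - g))))" if k: "k < d - 1" for k
  proof -
    have "cdf (Gop th0 Dl d K Rl g p i) k - cdf (Gop th0 Dl d K Rl g q i) k
      = measure_pmf.expectation (K i) (\<lambda>j. measure_pmf.expectation (Rl i j)
          (\<lambda>r. \<Sum>m<d. p j m * psi th0 Dl k (theta th0 Dl m + (r - g))) -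
          measure_pmf.expectation (Rl i j)
          (\<lambda>r. \<Sum>m<d. q j m * psi th0 Dl k (theta th0 Dl m + (r - g))))"
      unfolding cdf_Gop[OF Dl p fin k] cdf_Gop[OF Dl q fin k] by (rule exp_diff) simp
    also have "\<dots> = measure_pmf.expectation (K i) (\<lambda>j. measure_pmf.expectation (Rl i j)
          (\<lambda>r. \<Sum>m<d. (p j m - q j m) * psi th0 Dl k (theta th0 Dl m + (r - g))))"
      by (simp add: exp_diff[OF fin] sum_subtractf left_diff_distrib)
    finally show ?thesis .
  qed
  have "(\<Sum>k<d - 1. (cdf (Gop th0 Dl d K Rl g p i) k - cdf (Gop th0 Dl d K Rl g q i) k)\<^sup>2)
    = (\<Sum>k<d - 1. (measure_pmf.expectation (K i) (\<lambda>j. measure_pmf.expectation (Rl i j)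
          (\<lambda>r. \<Sum>m<d. (p j m - q j m) * psi th0 Dl k (theta th0 Dl m + (r - g)))))\<^sup>2)"
    by (rule sum.cong) (simp_all add: e)
  also have "\<dots> \<le> Bd"
  proof (rule Jpmf)
    fix j
    show "(\<Sum>k<d - 1. (measure_pmf.expectation (Rl i j)
          (\<lambda>r. \<Sum>m<d. (p j m - q j m) * psi th0 Dl k (theta th0 Dl m + (r - g))))\<^sup>2) \<le> Bd"
    proof (rule Jpmf[OF fin])
      fix r
      show "(\<Sum>k<d - 1. (\<Sum>m<d. (p j m - q j m) * psi th0 Dl k (theta th0 Dl m + (r - g)))\<^sup>2) \<le> Bd"
        using pnonexp[OF Dl p q d] B order_trans by blast
    qed
  qed simp
  finally show ?thesis .
qed

lemma Gop_gpart:
  fixes K :: "'s::finite \<Rightarrow> 's pmf"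
  assumes Dl: "Dl > 0" and p: "\<And>j. p j \<in> cat_simplex d"
    and fin: "\<And>i j. finite (set_pmf (Rl i j))"
  shows "(\<Sum>k<d - 1. (cdf (Gop th0 Dl d K Rl g p i) k - cdf (Gop th0 Dl d K Rl g' p i) k)\<^sup>2) \<le> ((g - g') / Dl)\<^sup>2"
proof -
  have e: "cdf (Gop th0 Dl d K Rl g p i) k - cdf (Gop th0 Dl d K Rl g' p i) k
     = measure_pmf.expectation (K i) (\<lambda>j. measure_pmf.expectation (Rl i j)
          (\<lambda>r. \<Sum>m<d. p j m * (psi th0 Dl k (theta th0 Dl m + (r - g)) - psi th0 Dl k (theta th0 Dl m + (r - g')))))"
    if k: "k < d - 1" for k
  proof -
    have "cdf (Gop th0 Dl d K Rl g p i) k - cdf (Gop th0 Dl d K Rl g' p i) k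
      = measure_pmf.expectation (K i) (\<lambda>j. measure_pmf.expectation (Rl i j)
          (\<lambda>r. \<Sum>m<d. p j m * psi th0 Dl k (theta th0 Dl m + (r - g))) -
          measure_pmf.expectation (Rl i j)
          (\<lambda>r. \<Sum>m<d. p j m * psi th0 Dl k (theta th0 Dl m + (r - g'))))"
      unfolding cdf_Gop[OF Dl p fin k] by (rule exp_diff) simp
    also have "\<dots> = measure_pmf.expectation (K i) (\<lambda>j. measure_pmf.expectation (Rl i j)
          (\<lambda>r. \<Sum>m<d. p j m * (psi th0 Dl k (theta th0 Dl m + (r - g)) - psi th0 Dl k (theta th0 Dl m + (r - g')))))"
      by (simp add: exp_diff[OF fin] sum_subtractf right_diff_distrib)
    finally show ?thesis .
  qed
  have "(\<Sum>k<d - 1. (cdf (Gop th0 Dl d K Rl g p i) k - cdf (Gop th0 Dl d K Rl g' p i) k)\<^sup>2)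
    = (\<Sum>k<d - 1. (measure_pmf.expectation (K i) (\<lambda>j. measure_pmf.expectation (Rl i j)
          (\<lambda>r. \<Sum>m<d. p j m * (psi th0 Dl k (theta th0 Dl m + (r - g)) - psi th0 Dl k (theta th0 Dl m + (r - g'))))))\<^sup>2)"
    by (rule sum.cong) (simp_all add: e)
  also have "\<dots> \<le> ((g - g') / Dl)\<^sup>2"
  proof (rule Jpmf)
    fix j
    show "(\<Sum>k<d - 1. (measure_pmf.expectation (Rl i j)
          (\<lambda>r. \<Sum>m<d. p j m * (psi th0 Dl k (theta th0 Dl m + (r - g)) - psi th0 Dl k (theta th0 Dl m + (r - g')))))\<^sup>2)
       \<le> ((g - g') / Dl)\<^sup>2"
    proof (rule Jpmf[OF fin])
      fix r
      show "(\<Sum>k<d - 1. (\<Sum>m<d. p j m * (psi th0 Dl k (theta th0 Dl m + (r - g)) - psi th0 Dl k (theta th0 Dl m + (r - g'))))\<^sup>2)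
       \<le> ((g - g') / Dl)\<^sup>2"
      proof (rule Jsum)
        show "(\<Sum>m<d. p j m) = 1" "\<And>m. m \<in> {..<d} \<Longrightarrow> 0 \<le> p j m"
          using p[of j] by (auto simp: cat_simplex_def)
        fix m
        have "(\<Sum>k<d - 1. (psi th0 Dl k (theta th0 Dl m + (r - g)) - psi th0 Dl k (theta th0 Dl m + (r - g')))\<^sup>2)
           \<le> (((theta th0 Dl m + (r - g)) - (theta th0 Dl m + (r - g'))) / Dl)\<^sup>2"
          by (rule gpart_pointwise[OF Dl])
        also have "\<dots> = ((g - g') / Dl)\<^sup>2" by (simp add: power2_eq_square field_simps)
        finally show "(\<Sum>k<d - 1. (psi th0 Dl k (theta th0 Dl m + (r - g)) - psi th0 Dl k (theta th0 Dl m + (r - g')))\<^sup>2)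
           \<le> ((g - g') / Dl)\<^sup>2" .
      qed simp
    qed
  qed simp
  finally show ?thesis .
qed

lemma cdf_hmu:
  "cdf (hmu th0 Dl d K mu Rl g p i) k = (1 - pmf mu i) * cdf (p i) k + pmf mu i * cdf (Gop th0 Dl d K Rl g p i) k"
  unfolding cdf_def hmu_def by (simp add: sum.distrib sum_distrib_left)

lemma lC_eq: "Dl > 0 \<Longrightarrow> lC Dl d u v = sqrt Dl * L2_set (\<lambda>k. cdf u k - cdf v k) {..<d - 1}"
  by (simp add: lC_def L2_set_def real_sqrt_mult)

lemma lC_le_lCinf:
  fixes p q :: "'s::finite \<Rightarrow> nat \<Rightarrow> real"
  shows "lC Dl d (p i) (q i) \<le> lCinf Dl d p q"
  unfolding lCinf_def by (rule Max_ge) auto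

lemma lCinf_le:
  fixes p q :: "'s::finite \<Rightarrow> nat \<Rightarrow> real"
  assumes "\<And>i. lC Dl d (p i) (q i) \<le> c"
  shows "lCinf Dl d p q \<le> c"
  unfolding lCinf_def using assms by (subst Max_le_iff) auto

lemma L2_le_of_sq:
  assumes "(\<Sum>k\<in>A. (f k)\<^sup>2) \<le> M\<^sup>2" "0 \<le> M"
  shows "L2_set f A \<le> M"
  unfolding L2_set_def using assms real_sqrt_le_mono[OF assms(1)] by simp

lemma sq_of_L2_le:
  assumes "L2_set f A \<le> M"
  shows "(\<Sum>k\<in>A. (f k)\<^sup>2) \<le> M\<^sup>2"
proof -
  have "0 \<le> L2_set f A" by (rule L2_set_nonneg)
  have "(\<Sum>k\<in>A. (f k)\<^sup>2) = (L2_set f A)\<^sup>2"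
    unfolding L2_set_def by (cases "finite A") (simp_all add: sum_nonneg)
  also have "\<dots> \<le> M\<^sup>2" using assms \<open>0 \<le> L2_set f A\<close> by (rule power_mono)
  finally show ?thesis .
qed

lemma hmu_bound:
  fixes K :: "'s::finite \<Rightarrow> 's pmf"
  assumes Dl: "Dl > 0" and d: "d > 0" and p: "\<And>j. p j \<in> cat_simplex d" and q: "\<And>j. q j \<in> cat_simplex d"
    and fin: "\<And>i j. finite (set_pmf (Rl i j))" and lam: "lam \<ge> 1 / sqrt Dl"
  shows "lC Dl d (hmu th0 Dl d K mu Rl g p i) (hmu th0 Dl d K mu Rl g' q i) \<le> lCinf Dl d p q + lam * \<bar>g - g'\<bar>"
proof -
  define A where "A = {..<d - 1}"
  define M where "M = lCinf Dl d p q / sqrt Dl"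
  define a where "a j k = cdf (p j) k - cdf (q j) k" for j k
  define G1 where "G1 k = cdf (Gop th0 Dl d K Rl g p i) k - cdf (Gop th0 Dl d K Rl g q i) k" for k
  define G2 where "G2 k = cdf (Gop th0 Dl d K Rl g q i) k - cdf (Gop th0 Dl d K Rl g' q i) k" for k
  define mi where "mi = pmf mu i"
  have mi: "0 \<le> mi" "mi \<le> 1" by (simp_all add: mi_def pmf_le_1)
  have sD: "sqrt Dl > 0" using Dl by simp
  have aj: "L2_set (a j) A \<le> M" for j
  proof -
    have "sqrt Dl * L2_set (a j) A \<le> lCinf Dl d p q"
      using lC_le_lCinf[of Dl d p j q] unfolding lC_eq[OF Dl] a_def A_def .
    then show ?thesis unfolding M_def using sD by (simp add: pos_le_divide_eq mult.commute)
  qed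
  have M0: "0 \<le> M" using aj[of i] L2_set_nonneg[of "a i" A] by linarith
  have "(\<Sum>k\<in>A. (G1 k)\<^sup>2) \<le> M\<^sup>2"
    unfolding G1_def A_def
    by (rule Gop_ppart[OF Dl d p q fin]) (use sq_of_L2_le[OF aj] in \<open>simp add: a_def A_def\<close>)
  then have g1: "L2_set G1 A \<le> M" using M0 by (rule L2_le_of_sq)
  have "(\<Sum>k\<in>A. (G2 k)\<^sup>2) \<le> ((g - g') / Dl)\<^sup>2"
    unfolding G2_def A_def by (rule Gop_gpart[OF Dl q fin])
  moreover have "((g - g') / Dl)\<^sup>2 = (\<bar>g - g'\<bar> / Dl)\<^sup>2" by (simp add: power_divide)
  ultimately have "(\<Sum>k\<in>A. (G2 k)\<^sup>2) \<le> (\<bar>g - g'\<bar> / Dl)\<^sup>2" by simp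
  then have g2: "L2_set G2 A \<le> \<bar>g - g'\<bar> / Dl" using Dl by (intro L2_le_of_sq) auto
  have hd: "cdf (hmu th0 Dl d K mu Rl g p i) k - cdf (hmu th0 Dl d K mu Rl g' q i) k
      = (1 - mi) * a i k + mi * (G1 k + G2 k)" for k
    unfolding cdf_hmu a_def G1_def G2_def mi_def by (simp add: algebra_simps)
  have "L2_set (\<lambda>k. (1 - mi) * a i k + mi * (G1 k + G2 k)) A
      \<le> L2_set (\<lambda>k. (1 - mi) * a i k) A + L2_set (\<lambda>k. mi * (G1 k + G2 k)) A"
    by (rule L2_set_triangle_ineq)
  also have "\<dots> = (1 - mi) * L2_set (a i) A + mi * L2_set (\<lambda>k. G1 k + G2 k) A"
    using mi by (simp add: L2_set_right_distrib)
  also have "\<dots> \<le> (1 - mi) * M + mi * (M + \<bar>g - g'\<bar> / Dl)"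
  proof (rule add_mono)
    show "(1 - mi) * L2_set (a i) A \<le> (1 - mi) * M" using mi aj[of i] by (simp add: mult_left_mono)
    have "L2_set (\<lambda>k. G1 k + G2 k) A \<le> M + \<bar>g - g'\<bar> / Dl"
      using L2_set_triangle_ineq[of G1 G2 A] g1 g2 by linarith
    then show "mi * L2_set (\<lambda>k. G1 k + G2 k) A \<le> mi * (M + \<bar>g - g'\<bar> / Dl)" using mi by (simp add: mult_left_mono)
  qed
  also have "\<dots> = M + mi * (\<bar>g - g'\<bar> / Dl)" by (simp add: algebra_simps)
  finally have L: "L2_set (\<lambda>k. cdf (hmu th0 Dl d K mu Rl g p i) k - cdf (hmu th0 Dl d K mu Rl g' q i) k) A
     \<le> M + mi * (\<bar>g - g'\<bar> / Dl)" unfolding hd .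
  have "lC Dl d (hmu th0 Dl d K mu Rl g p i) (hmu th0 Dl d K mu Rl g' q i)
     \<le> sqrt Dl * (M + mi * (\<bar>g - g'\<bar> / Dl))"
    unfolding lC_eq[OF Dl] A_def[symmetric] using L sD by (simp add: mult_left_mono)
  also have "\<dots> = lCinf Dl d p q + mi * (\<bar>g - g'\<bar> * (sqrt Dl / Dl))"
  proof -
    have "sqrt Dl * M = lCinf Dl d p q" unfolding M_def using sD by simp
    moreover have "sqrt Dl * (mi * (\<bar>g - g'\<bar> / Dl)) = mi * (\<bar>g - g'\<bar> * (sqrt Dl / Dl))" by simp
    ultimately show ?thesis by (simp add: distrib_left)
  qed
  also have "sqrt Dl / Dl = 1 / sqrt Dl"
  proof -
    have e: "sqrt Dl * sqrt Dl = Dl" using Dl by simp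
    have "sqrt Dl / Dl = sqrt Dl / (sqrt Dl * sqrt Dl)" by (simp only: e)
    also have "\<dots> = 1 / sqrt Dl" using sD by (intro nonzero_divide_mult_cancel_left) simp
    finally show ?thesis .
  qed
  also have "lCinf Dl d p q + mi * (\<bar>g - g'\<bar> * (1 / sqrt Dl)) \<le> lCinf Dl d p q + lam * \<bar>g - g'\<bar>"
  proof -
    have "mi * (\<bar>g - g'\<bar> * (1 / sqrt Dl)) \<le> 1 * (\<bar>g - g'\<bar> * (1 / sqrt Dl))"
      using mi sD by (intro mult_right_mono) auto
    also have "\<dots> = (1 / sqrt Dl) * \<bar>g - g'\<bar>" by simp
    also have "\<dots> \<le> lam * \<bar>g - g'\<bar>" using lam by (intro mult_right_mono) auto
    finally show ?thesis by simp
  qed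
  finally show ?thesis .
qed

lemma Ppow_nonneg: "0 \<le> Ppow K n i j"
  by (induction n arbitrary: j) (auto simp: Ptr_def intro!: sum_nonneg)

lemma stat_pow:
  fixes K :: "'s::finite \<Rightarrow> 's pmf"
  assumes "stationary K mu"
  shows "(\<Sum>i\<in>UNIV. pmf mu i * Ppow K n i j) = pmf mu j"
proof (induction n arbitrary: j)
  case 0
  then show ?case by (simp add: if_distrib cong: if_cong)
next
  case (Suc n)
  have "(\<Sum>i\<in>UNIV. pmf mu i * Ppow K (Suc n) i j) = (\<Sum>l\<in>UNIV. (\<Sum>i\<in>UNIV. pmf mu i * Ppow K n i l) * Ptr K l j)"
    by (simp add: sum_distrib_left sum_distrib_right mult.assoc) (rule sum.swap)
  also have "\<dots> = (\<Sum>l\<in>UNIV. pmf mu l * Ptr K l j)" using Suc by simp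
  also have "\<dots> = pmf mu j" using assms by (simp add: stationary_def)
  finally show ?case .
qed

lemma mu_pos:
  fixes K :: "'s::finite \<Rightarrow> 's pmf"
  assumes irr: "irreducible_chain K" and st: "stationary K mu"
  shows "pmf mu j > 0"
proof -
  obtain i0 where i0: "i0 \<in> set_pmf mu" using set_pmf_not_empty[of mu] by blast
  then have m0: "pmf mu i0 > 0" by (simp add: pmf_positive)
  obtain n where n: "Ppow K n i0 j > 0" using irr by (auto simp: irreducible_chain_def)
  have "pmf mu i0 * Ppow K n i0 j \<le> (\<Sum>i\<in>UNIV. pmf mu i * Ppow K n i j)"
    by (rule member_le_sum) (auto simp: Ppow_nonneg)
  also have "\<dots> = pmf mu j" by (rule stat_pow[OF st])
  finally show ?thesis using m0 n by (smt (verit) mult_pos_pos)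
qed

lemma conv01:
  fixes w f :: "'a \<Rightarrow> real"
  assumes "finite A" "\<And>x. x \<in> A \<Longrightarrow> 0 \<le> w x" "(\<Sum>x\<in>A. w x) = 1" "\<And>x. x \<in> A \<Longrightarrow> f x \<in> {0..1}"
  shows "(\<Sum>x\<in>A. w x * f x) \<in> {0..1}"
proof -
  have "0 \<le> (\<Sum>x\<in>A. w x * f x)" using assms by (auto intro!: sum_nonneg)
  moreover have "(\<Sum>x\<in>A. w x * f x) \<le> (\<Sum>x\<in>A. w x * 1)"
    using assms by (intro sum_mono mult_left_mono) auto
  ultimately show ?thesis using assms(3) by simp
qed

lemma exp_01:
  fixes M :: "real pmf"
  assumes "finite (set_pmf M)" "set_pmf M \<subseteq> {0..1}"
  shows "measure_pmf.expectation M (\<lambda>r. r) \<in> {0..1}"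
proof -
  have "measure_pmf.expectation M (\<lambda>r. r) = (\<Sum>x\<in>set_pmf M. pmf M x * x)"
    by (subst integral_measure_pmf_real[OF assms(1)]) (auto simp: mult.commute)
  also have "\<dots> \<in> {0..1}"
    by (rule conv01) (use assms sum_pmf_eq_1[OF assms(1)] in auto)
  finally show ?thesis .
qed

lemma gain_01:
  fixes K :: "'s::finite \<Rightarrow> 's pmf"
  assumes "\<And>i j. finite (set_pmf (Rl i j)) \<and> set_pmf (Rl i j) \<subseteq> {0..1}"
  shows "gain K mu Rl \<in> {0..1}"
  unfolding gain_def
proof (rule conv01)
  show "(\<Sum>x\<in>UNIV. pmf mu x) = 1" by (rule sum_pmf_eq_1) auto
  fix i
  show "(\<Sum>j\<in>UNIV. Ptr K i j * measure_pmf.expectation (Rl i j) (\<lambda>r. r)) \<in> {0..1}"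
    unfolding Ptr_def
  proof (rule conv01)
    show "(\<Sum>x\<in>UNIV. pmf (K i) x) = 1" by (rule sum_pmf_eq_1) auto
    fix j
    show "measure_pmf.expectation (Rl i j) (\<lambda>r. r) \<in> {0..1}"
      using exp_01 assms by blast
  qed auto
qed auto

lemma Hupd_app: "Hupd th0 Dl d g p (s0, r, s') s k = (if s = s0 then Lshift th0 Dl d (r - g) (p s') k else p s k)"
  unfolding Hupd_def by simp

lemma exp_Ylaw:
  fixes K :: "'s::finite \<Rightarrow> 's pmf" and h :: "'s \<times> real \<times> 's \<Rightarrow> real"
  assumes fin: "\<And>i j. finite (set_pmf (Rl i j))"
  shows "measure_pmf.expectation (Ylaw K mu Rl) h
     = measure_pmf.expectation mu (\<lambda>s0. measure_pmf.expectation (K s0) (\<lambda>s'.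
         measure_pmf.expectation (Rl s0 s') (\<lambda>r. h (s0, r, s'))))"
  unfolding Ylaw_def
  by (subst exp_bind) (simp_all add: exp_bind fin)

theorem proposition8:
  fixes K :: "'s::finite \<Rightarrow> 's pmf" and mu :: "'s pmf" and Rl :: "'s \<Rightarrow> 's \<Rightarrow> real pmf"
    and th0 Dl lam :: real and d :: nat
  assumes "Dl > 0" and "d > 0"
    and "irreducible_chain K" and "aperiodic_chain K" and "stationary K mu"
    and "\<And>i j. finite (set_pmf (Rl i j)) \<and> set_pmf (Rl i j) \<subseteq> {0..1}"
    and "lam \<ge> 1 / sqrt Dl"
  shows "(\<forall>(p, g)\<in>Zset d.
            (\<forall>s k. measure_pmf.expectation (Ylaw K mu Rl) (\<lambda>y. Hupd th0 Dl d g p y s k)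
                     = hmu th0 Dl d K mu Rl g p s k)
          \<and> measure_pmf.expectation (Ylaw K mu Rl) (\<lambda>y. fst (snd y)) = gain K mu Rl)
       \<and> (\<forall>z\<in>Zset d. \<forall>z'\<in>Zset d.
            dlam Dl d lam (Tmap th0 Dl d K mu Rl z) (Tmap th0 Dl d K mu Rl z') \<le> dlam Dl d lam z z')
       \<and> {z \<in> Zset d. Tmap th0 Dl d K mu Rl z = z}
          = {(p, gain K mu Rl) | p. (\<forall>i. p i \<in> cat_simplex d) \<and> Gop th0 Dl d K Rl (gain K mu Rl) p = p}"
proof -
  note Dl = assms(1) and d = assms(2) and irr = assms(3) and st = assms(5) and lam = assms(7)
  have fin: "\<And>i j. finite (set_pmf (Rl i j))" using assms(6) by blast
  have mu1: "(\<Sum>x\<in>UNIV. pmf mu x) = 1" by (rule sum_pmf_eq_1) auto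
  have P1: "(\<forall>s k. measure_pmf.expectation (Ylaw K mu Rl) (\<lambda>y. Hupd th0 Dl d g p y s k)
                     = hmu th0 Dl d K mu Rl g p s k)
          \<and> measure_pmf.expectation (Ylaw K mu Rl) (\<lambda>y. fst (snd y)) = gain K mu Rl"
    if pg: "(p, g) \<in> Zset d" for p g
  proof (intro conjI allI)
    have p: "\<And>j. p j \<in> cat_simplex d" using pg by (simp add: Zset_def)
    fix s k
    define A where "A = Gop th0 Dl d K Rl g p s k"
    define c where "c = p s k"
    have "measure_pmf.expectation (Ylaw K mu Rl) (\<lambda>y. Hupd th0 Dl d g p y s k)
       = measure_pmf.expectation mu (\<lambda>s0. measure_pmf.expectation (K s0) (\<lambda>s'.
         measure_pmf.expectation (Rl s0 s') (\<lambda>r. if s = s0 then Lshift th0 Dl d (r - g) (p s') k else p s k)))"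
      unfolding exp_Ylaw[OF fin] Hupd_app ..
    also have "\<dots> = measure_pmf.expectation mu (\<lambda>s0. if s0 = s then A else c)"
      by (rule arg_cong[where f="measure_pmf.expectation mu"], rule ext)
         (auto simp: A_def c_def Gop_exp[OF Dl p fin])
    also have "\<dots> = (\<Sum>s0\<in>UNIV. pmf mu s0 * (c + (if s0 = s then A - c else 0)))"
      unfolding exp_finite_type by (rule sum.cong) auto
    also have "\<dots> = c * (\<Sum>s0\<in>UNIV. pmf mu s0) + pmf mu s * (A - c)"
    proof -
      have "(\<Sum>s0\<in>UNIV. pmf mu s0 * (c + (if s0 = s then A - c else 0)))
         = (\<Sum>s0\<in>UNIV. pmf mu s0 * c) + (\<Sum>s0\<in>UNIV. (if s0 = s then pmf mu s * (A - c) else 0))"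
        by (simp only: distrib_left sum.distrib mult_zero_right if_distrib[of "(*) (pmf mu _)"]) (rule arg_cong2[where f="(+)"], simp, rule sum.cong, auto)
      also have "\<dots> = c * (\<Sum>s0\<in>UNIV. pmf mu s0) + pmf mu s * (A - c)"
        by (simp add: sum_distrib_left mult.commute)
      finally show ?thesis .
    qed
    also have "\<dots> = hmu th0 Dl d K mu Rl g p s k"
      unfolding mu1 hmu_def A_def c_def by (simp add: algebra_simps)
    finally show "measure_pmf.expectation (Ylaw K mu Rl) (\<lambda>y. Hupd th0 Dl d g p y s k)
       = hmu th0 Dl d K mu Rl g p s k" .
  next
    show "measure_pmf.expectation (Ylaw K mu Rl) (\<lambda>y. fst (snd y)) = gain K mu Rl"
      unfolding exp_Ylaw[OF fin] gain_def Ptr_def by (simp add: exp_finite_type)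
  qed
  have P2: "dlam Dl d lam (Tmap th0 Dl d K mu Rl z) (Tmap th0 Dl d K mu Rl z') \<le> dlam Dl d lam z z'"
    if z: "z \<in> Zset d" and z': "z' \<in> Zset d" for z z'
  proof -
    obtain p g where zz: "z = (p, g)" by (cases z)
    obtain q g' where zz': "z' = (q, g')" by (cases z')
    have p: "\<And>j. p j \<in> cat_simplex d" using z zz by (simp add: Zset_def)
    have q: "\<And>j. q j \<in> cat_simplex d" using z' zz' by (simp add: Zset_def)
    have "lCinf Dl d (hmu th0 Dl d K mu Rl g p) (hmu th0 Dl d K mu Rl g' q) \<le> lCinf Dl d p q + lam * \<bar>g - g'\<bar>"
      by (rule lCinf_le, rule hmu_bound[OF Dl d p q fin lam])
    then show ?thesis unfolding zz zz' dlam_def Tmap_def by simp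
  qed
  have P3: "{z \<in> Zset d. Tmap th0 Dl d K mu Rl z = z}
          = {(p, gain K mu Rl) | p. (\<forall>i. p i \<in> cat_simplex d) \<and> Gop th0 Dl d K Rl (gain K mu Rl) p = p}"
  proof (intro equalityI subsetI)
    fix z assume "z \<in> {z \<in> Zset d. Tmap th0 Dl d K mu Rl z = z}"
    then obtain p g where zz: "z = (p, g)" and zZ: "(p, g) \<in> Zset d" and fx: "Tmap th0 Dl d K mu Rl (p, g) = (p, g)"
      by (cases z) auto
    have p: "\<And>j. p j \<in> cat_simplex d" using zZ by (simp add: Zset_def)
    have g: "g = gain K mu Rl" and h: "hmu th0 Dl d K mu Rl g p = p" using fx by (auto simp: Tmap_def)
    have "Gop th0 Dl d K Rl g p = p"
    proof (intro ext)
      fix i k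
      have "hmu th0 Dl d K mu Rl g p i k = p i k" using h by simp
      then have "pmf mu i * (Gop th0 Dl d K Rl g p i k - p i k) = 0"
        unfolding hmu_def by (simp add: algebra_simps)
      then show "Gop th0 Dl d K Rl g p i k = p i k" using mu_pos[OF irr st, of i] by simp
    qed
    then show "z \<in> {(p, gain K mu Rl) | p. (\<forall>i. p i \<in> cat_simplex d) \<and> Gop th0 Dl d K Rl (gain K mu Rl) p = p}"
      using zz g p by blast
  next
    fix z assume "z \<in> {(p, gain K mu Rl) | p. (\<forall>i. p i \<in> cat_simplex d) \<and> Gop th0 Dl d K Rl (gain K mu Rl) p = p}"
    then obtain p where zz: "z = (p, gain K mu Rl)" and p: "\<And>i. p i \<in> cat_simplex d"
      and G: "Gop th0 Dl d K Rl (gain K mu Rl) p = p" by blast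
    have "(p, gain K mu Rl) \<in> Zset d" using p gain_01[OF assms(6)] by (simp add: Zset_def)
    moreover have "hmu th0 Dl d K mu Rl (gain K mu Rl) p = p"
      by (intro ext) (simp add: hmu_def G algebra_simps)
    ultimately show "z \<in> {z \<in> Zset d. Tmap th0 Dl d K mu Rl z = z}"
      using zz by (simp add: Tmap_def)
  qed
  show ?thesis using P1 P2 P3 by blast
qed

end
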